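(* Let $G=(V,E)$ be a graph with nonnegative edge lengths $l_e$, root $r$, and integer demands $d_v>0$ on a set of demand nodes, with total demand $D=\sum_v d_v$. Fix $\epsilon>0$, let $K=\lceil \log_{1+\epsilon} D\rceil$, $M_i=(1+\epsilon)^i$ and $A_i(x)=\min\{x,M_i\}$ for $0\le i\le K$. Run the following procedure: (1) for each $i=0,\dots,K$ let $T_i$ be a routing tree returned by a (deterministic) $\lambda$-approximation algorithm for the single-sink rent-or-buy problem with cost function $A_i$; (2) for $i=1,\dots,K$ in increasing order, if $A_i(T_{i-1})<A_i(T_i)$ set $T_i\leftarrow T_{i-1}$; (3) for $i=K-1,\dots,0$ in decreasing order, if $A_i(T_{i+1})<A_i(T_i)$ set $T_i\leftarrow T_{i+1}$. Let $R_i$ and $B_i$ be the rent cost and normalized buy cost of the resulting tree $T_i$ (with respect to $M_i$). Then for every $i$ with $0\le i<K$ we have $B_i\ge B_{i+1}$ and $R_i\le R_{i+1}$.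
   Context: A routing tree is a tree in $G$ containing $r$ and all demand nodes; each demand node $v$ sends $d_v$ units of flow to $r$ along its unique tree path, and $x_e$ denotes the total flow on edge $e$. For a function $f$, the cost of a routing tree $T$ is $f(T)=\sum_{e\in T} l_e f(x_e)$. The single-sink rent-or-buy (SSRoB) problem with parameter $M$ is to find a routing tree minimizing $A(T)$ where $A(x)=\min\{x,M\}$; a $\lambda$-approximation algorithm returns a routing tree whose cost is at most $\lambda$ times the optimum. For a routing tree $T_i$ with flows $x_e$, its rent cost is $R_i=\sum_{e\in T_i,\,x_e<M_i} l_e A_i(x_e)$ and its normalized buy cost is $B_i=\sum_{e\in T_i,\,x_e\ge M_i} l_e$, so that $A_i(T_i)=R_i+M_iB_i$. *)

theory Defs
  imports Complex_Main
begin

text \<open>Undirected graphs: an edge is a 2-element vertex set. A subgraph is a set of edges.\<close>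

definition is_graph :: "'a set \<Rightarrow> 'a set set \<Rightarrow> bool" where
  "is_graph V E \<longleftrightarrow> finite V \<and> (\<forall>e\<in>E. \<exists>u v. e = {u, v} \<and> u \<in> V \<and> v \<in> V \<and> u \<noteq> v)"

definition path_edges :: "'a list \<Rightarrow> 'a set set" where
  "path_edges xs = set (map (\<lambda>(a, b). {a, b}) (zip xs (tl xs)))"

definition is_path :: "'a set set \<Rightarrow> 'a list \<Rightarrow> bool" where
  "is_path T xs \<longleftrightarrow> xs \<noteq> [] \<and> distinct xs \<and> path_edges xs \<subseteq> T"

definition tree_verts :: "'a \<Rightarrow> 'a set set \<Rightarrow> 'a set" where
  "tree_verts r T = insert r (\<Union> T)"

definition connected_on :: "'a set \<Rightarrow> 'a set set \<Rightarrow> bool" where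
  "connected_on W T \<longleftrightarrow> (\<forall>u\<in>W. \<forall>v\<in>W. \<exists>xs. is_path T xs \<and> hd xs = u \<and> last xs = v)"

definition acyclic_edges :: "'a set set \<Rightarrow> bool" where
  "acyclic_edges T \<longleftrightarrow> \<not> (\<exists>xs. is_path T xs \<and> length xs \<ge> 3 \<and> {last xs, hd xs} \<in> T)"

definition routing_tree :: "'a set set \<Rightarrow> 'a \<Rightarrow> 'a set \<Rightarrow> 'a set set \<Rightarrow> bool" where
  "routing_tree E r Dm T \<longleftrightarrow> T \<subseteq> E \<and> finite T \<and> Dm \<subseteq> tree_verts r T
     \<and> connected_on (tree_verts r T) T \<and> acyclic_edges T"

definition flow :: "'a set set \<Rightarrow> 'a \<Rightarrow> 'a set \<Rightarrow> ('a \<Rightarrow> nat) \<Rightarrow> 'a set \<Rightarrow> real" where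
  "flow T r Dm d e = real (\<Sum>v\<in>{v\<in>Dm. \<exists>xs. is_path T xs \<and> hd xs = v \<and> last xs = r \<and> e \<in> path_edges xs}. d v)"

definition tree_cost :: "('a set \<Rightarrow> real) \<Rightarrow> 'a \<Rightarrow> 'a set \<Rightarrow> ('a \<Rightarrow> nat) \<Rightarrow> (real \<Rightarrow> real) \<Rightarrow> 'a set set \<Rightarrow> real" where
  "tree_cost l r Dm d f T = (\<Sum>e\<in>T. l e * f (flow T r Dm d e))"

definition Acap :: "real \<Rightarrow> real \<Rightarrow> real" where
  "Acap M x = min x M"

definition rent_cost :: "('a set \<Rightarrow> real) \<Rightarrow> 'a \<Rightarrow> 'a set \<Rightarrow> ('a \<Rightarrow> nat) \<Rightarrow> real \<Rightarrow> 'a set set \<Rightarrow> real" where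
  "rent_cost l r Dm d M T = (\<Sum>e\<in>{e\<in>T. flow T r Dm d e < M}. l e * Acap M (flow T r Dm d e))"

definition buy_cost :: "('a set \<Rightarrow> real) \<Rightarrow> 'a \<Rightarrow> 'a set \<Rightarrow> ('a \<Rightarrow> nat) \<Rightarrow> real \<Rightarrow> 'a set set \<Rightarrow> real" where
  "buy_cost l r Dm d M T = (\<Sum>e\<in>{e\<in>T. flow T r Dm d e \<ge> M}. l e)"

end

theory Submission
  imports Defs
begin

lemma sA: assumes "finite S" "\<forall>e\<in>S. (l::'b\<Rightarrow>real) e \<ge> 0" "M < M'"
  shows "(\<Sum>e\<in>S. l e * min (x e) M') \<le> (\<Sum>e\<in>S. l e * min (x e) M) + (M'-M) * (\<Sum>e\<in>{e\<in>S. x e \<ge> M}. l e)"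
proof -
  have "(\<Sum>e\<in>{e\<in>S. x e \<ge> M}. l e) = (\<Sum>e\<in>S. if x e \<ge> M then l e else 0)"
    using assms(1) by (simp add: sum.inter_filter)
  moreover have "(\<Sum>e\<in>S. l e * min (x e) M') \<le> (\<Sum>e\<in>S. l e * min (x e) M + (M'-M) * (if x e \<ge> M then l e else 0))"
  proof (rule sum_mono)
    fix e assume "e \<in> S"
    hence l: "l e \<ge> 0" using assms by auto
    have "min (x e) M' \<le> min (x e) M + (M'-M) * (if x e \<ge> M then 1 else 0)" using assms(3) by auto
    from mult_left_mono[OF this l] show "l e * min (x e) M' \<le> l e * min (x e) M + (M'-M) * (if x e \<ge> M then l e else 0)"
      by (simp add: algebra_simps split: if_splits)
  qed
  ultimately show ?thesis by (simp add: sum.distrib sum_distrib_left)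
qed

lemma sB: assumes "finite S" "\<forall>e\<in>S. (l::'b\<Rightarrow>real) e \<ge> 0" "M < M'"
  shows "(\<Sum>e\<in>S. l e * min (x e) M) \<le> (\<Sum>e\<in>S. l e * min (x e) M') - (M'-M) * (\<Sum>e\<in>{e\<in>S. x e \<ge> M'}. l e)"
proof -
  have "(\<Sum>e\<in>{e\<in>S. x e \<ge> M'}. l e) = (\<Sum>e\<in>S. if x e \<ge> M' then l e else 0)"
    using assms(1) by (simp add: sum.inter_filter)
  moreover have "(\<Sum>e\<in>S. l e * min (x e) M) \<le> (\<Sum>e\<in>S. l e * min (x e) M' - (M'-M) * (if x e \<ge> M' then l e else 0))"
  proof (rule sum_mono)
    fix e assume "e \<in> S"
    hence l: "l e \<ge> 0" using assms by auto
    have "min (x e) M \<le> min (x e) M' - (M'-M) * (if x e \<ge> M' then 1 else 0)" using assms(3) by auto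
    from mult_left_mono[OF this l] show "l e * min (x e) M \<le> l e * min (x e) M' - (M'-M) * (if x e \<ge> M' then l e else 0)"
      by (simp add: algebra_simps split: if_splits)
  qed
  ultimately show ?thesis by (simp add: sum_subtractf sum_distrib_left)
qed

lemma sC: assumes "finite S" "\<forall>e\<in>S. (l::'b\<Rightarrow>real) e \<ge> 0" "M < M'"
  shows "(\<Sum>e\<in>S. l e * min (x e) M) \<le> (\<Sum>e\<in>{e\<in>S. x e < M'}. l e * min (x e) M') + M * (\<Sum>e\<in>{e\<in>S. x e \<ge> M'}. l e)"
proof -
  have "(\<Sum>e\<in>{e\<in>S. x e \<ge> M'}. l e) = (\<Sum>e\<in>S. if x e \<ge> M' then l e else 0)"
    using assms(1) by (simp add: sum.inter_filter)
  moreover have "(\<Sum>e\<in>{e\<in>S. x e < M'}. l e * min (x e) M') = (\<Sum>e\<in>S. if x e < M' then l e * min (x e) M' else 0)"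
    by (rule sum.inter_filter[OF assms(1)])
  moreover have "(\<Sum>e\<in>S. l e * min (x e) M) \<le> (\<Sum>e\<in>S. (if x e < M' then l e * min (x e) M' else 0) + M * (if x e \<ge> M' then l e else 0))"
  proof (rule sum_mono)
    fix e assume "e \<in> S"
    hence l: "l e \<ge> 0" using assms by auto
    have "min (x e) M \<le> (if x e < M' then min (x e) M' else 0) + M * (if x e \<ge> M' then 1 else 0)" using assms(3) by auto
    from mult_left_mono[OF this l] show "l e * min (x e) M \<le> (if x e < M' then l e * min (x e) M' else 0) + M * (if x e \<ge> M' then l e else 0)"
      by (simp add: algebra_simps split: if_splits)
  qed
  ultimately show ?thesis by (simp add: sum.distrib sum_distrib_left)
qed

lemma sD: assumes "finite S"
  shows "(\<Sum>e\<in>S. (l::'b\<Rightarrow>real) e * min (x e) M) = (\<Sum>e\<in>{e\<in>S. x e < M}. l e * min (x e) M) + M * (\<Sum>e\<in>{e\<in>S. x e \<ge> M}. l e)"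
proof -
  have "(\<Sum>e\<in>{e\<in>S. x e \<ge> M}. l e) = (\<Sum>e\<in>S. if x e \<ge> M then l e else 0)"
    using assms(1) by (simp add: sum.inter_filter)
  moreover have "(\<Sum>e\<in>{e\<in>S. x e < M}. l e * min (x e) M) = (\<Sum>e\<in>S. if x e < M then l e * min (x e) M else 0)"
    by (rule sum.inter_filter[OF assms(1)])
  moreover have "(\<Sum>e\<in>S. l e * min (x e) M) = (\<Sum>e\<in>S. (if x e < M then l e * min (x e) M else 0) + M * (if x e \<ge> M then l e else 0))"
    by (rule sum.cong) auto
  ultimately show ?thesis by (simp add: sum.distrib sum_distrib_left)
qed

lemma exch:
  fixes l :: "'a set \<Rightarrow> real"
  assumes fT: "finite T" and fT': "finite T'" and lT: "\<forall>e\<in>T. l e \<ge> 0" and lT': "\<forall>e\<in>T'. l e \<ge> 0"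
    and M: "0 < M" "M < M'"
    and c1: "tree_cost l r Dm d (Acap M) T \<le> tree_cost l r Dm d (Acap M) T'"
    and c2: "tree_cost l r Dm d (Acap M') T' \<le> tree_cost l r Dm d (Acap M') T"
  shows "buy_cost l r Dm d M T \<ge> buy_cost l r Dm d M' T' \<and> rent_cost l r Dm d M T \<le> rent_cost l r Dm d M' T'"
proof -
  define x where "x = flow T r Dm d"
  define y where "y = flow T' r Dm d"
  have c1': "(\<Sum>e\<in>T. l e * min (x e) M) \<le> (\<Sum>e\<in>T'. l e * min (y e) M)"
    using c1 by (simp add: tree_cost_def Acap_def x_def y_def)
  have c2': "(\<Sum>e\<in>T'. l e * min (y e) M') \<le> (\<Sum>e\<in>T. l e * min (x e) M')"
    using c2 by (simp add: tree_cost_def Acap_def x_def y_def)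
  have B: "buy_cost l r Dm d M T = (\<Sum>e\<in>{e\<in>T. x e \<ge> M}. l e)" by (simp add: buy_cost_def x_def)
  have B': "buy_cost l r Dm d M' T' = (\<Sum>e\<in>{e\<in>T'. y e \<ge> M'}. l e)" by (simp add: buy_cost_def y_def)
  have R: "rent_cost l r Dm d M T = (\<Sum>e\<in>{e\<in>T. x e < M}. l e * min (x e) M)" by (simp add: rent_cost_def Acap_def x_def)
  have R': "rent_cost l r Dm d M' T' = (\<Sum>e\<in>{e\<in>T'. y e < M'}. l e * min (y e) M')" by (simp add: rent_cost_def Acap_def y_def)
  note a = sA[OF fT lT M(2), of x] and b = sB[OF fT' lT' M(2), of y]
    and c = sC[OF fT' lT' M(2), of y] and dd = sD[OF fT, of l x M]
  have "(M'-M) * ((\<Sum>e\<in>{e\<in>T. x e \<ge> M}. l e) - (\<Sum>e\<in>{e\<in>T'. y e \<ge> M'}. l e)) \<ge> 0"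
    using a b c1' c2' by (simp add: algebra_simps)
  hence bb: "(\<Sum>e\<in>{e\<in>T. x e \<ge> M}. l e) \<ge> (\<Sum>e\<in>{e\<in>T'. y e \<ge> M'}. l e)"
    using M by (simp add: zero_le_mult_iff)
  have "M * (\<Sum>e\<in>{e\<in>T'. y e \<ge> M'}. l e) \<le> M * (\<Sum>e\<in>{e\<in>T. x e \<ge> M}. l e)"
    using bb M by simp
  hence "(\<Sum>e\<in>{e\<in>T. x e < M}. l e * min (x e) M) \<le> (\<Sum>e\<in>{e\<in>T'. y e < M'}. l e * min (y e) M')"
    using c dd c1' by linarith
  thus ?thesis using bb B B' R R' by simp
qed

theorem lemma4:
  fixes V :: "'a set" and E :: "'a set set" and l :: "'a set \<Rightarrow> real"
    and r :: 'a and Dm :: "'a set" and d :: "'a \<Rightarrow> nat"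
    and eps lam :: real and K :: nat
    and T0 T1 T2 :: "nat \<Rightarrow> 'a set set"
  assumes graph: "is_graph V E"
    and lens: "\<forall>e\<in>E. l e \<ge> 0"
    and root: "r \<in> V"
    and dem: "Dm \<subseteq> V" "\<forall>v\<in>Dm. d v > 0"
    and eps_pos: "eps > 0"
    and K_def: "K = nat \<lceil>log (1 + eps) (real (\<Sum>v\<in>Dm. d v))\<rceil>"
    and approx: "\<forall>i\<le>K. routing_tree E r Dm (T0 i) \<and>
        (\<forall>T. routing_tree E r Dm T \<longrightarrow>
           tree_cost l r Dm d (Acap ((1 + eps) ^ i)) (T0 i)
             \<le> lam * tree_cost l r Dm d (Acap ((1 + eps) ^ i)) T)"
    and step2_0: "T1 0 = T0 0"
    and step2: "\<forall>i\<in>{1..K}. T1 i =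
        (if tree_cost l r Dm d (Acap ((1 + eps) ^ i)) (T1 (i - 1))
              < tree_cost l r Dm d (Acap ((1 + eps) ^ i)) (T0 i)
         then T1 (i - 1) else T0 i)"
    and step3_K: "T2 K = T1 K"
    and step3: "\<forall>i<K. T2 i =
        (if tree_cost l r Dm d (Acap ((1 + eps) ^ i)) (T2 (i + 1))
              < tree_cost l r Dm d (Acap ((1 + eps) ^ i)) (T1 i)
         then T2 (i + 1) else T1 i)"
    and i: "i < K"
  shows "buy_cost l r Dm d ((1 + eps) ^ i) (T2 i) \<ge> buy_cost l r Dm d ((1 + eps) ^ (i + 1)) (T2 (i + 1))
       \<and> rent_cost l r Dm d ((1 + eps) ^ i) (T2 i) \<le> rent_cost l r Dm d ((1 + eps) ^ (i + 1)) (T2 (i + 1))"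
proof -
  define C where "C j T = tree_cost l r Dm d (Acap ((1 + eps) ^ j)) T" for j T
  have rt1: "routing_tree E r Dm (T1 j)" if "j \<le> K" for j
    using that
  proof (induction j)
    case 0 then show ?case using approx step2_0 by auto
  next
    case (Suc j)
    then have "T1 (Suc j) = (if C (Suc j) (T1 j) < C (Suc j) (T0 (Suc j)) then T1 j else T0 (Suc j))"
      using step2 by (auto simp: C_def)
    then show ?case using Suc approx by auto
  qed
  have rt2: "routing_tree E r Dm (T2 (K - k))" for k
  proof (induction k)
    case 0 then show ?case using rt1 step3_K by auto
  next
    case (Suc k)
    show ?case
    proof (cases "Suc k \<le> K")
      case True
      hence e: "K - Suc k + 1 = K - k" and True: "K - Suc k < K" by simp_all
      have "T2 (K - Suc k) = (if C (K - Suc k) (T2 (K - k)) < C (K - Suc k) (T1 (K - Suc k)) then T2 (K - k) else T1 (K - Suc k))"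
        using step3 True e by (auto simp: C_def)
      then show ?thesis using Suc rt1[of "K - Suc k"] by auto
    next
      case False
      hence "K - Suc k = K - k" by simp
      then show ?thesis using Suc by simp
    qed
  qed
  have rt2': "routing_tree E r Dm (T2 j)" if "j \<le> K" for j
    using rt2[of "K - j"] that by simp
  have le21: "C j (T2 j) \<le> C j (T1 j)" if "j \<le> K" for j
  proof (cases "j < K")
    case True
    then show ?thesis using step3 by (auto simp: C_def)
  next
    case False
    then show ?thesis using that step3_K by simp
  qed
  have c1: "C i (T2 i) \<le> C i (T2 (i+1))"
    using step3 i by (auto simp: C_def)
  have c2: "C (i+1) (T2 (i+1)) \<le> C (i+1) (T2 i)"
  proof (cases "T2 i = T2 (i+1)")
    case True then show ?thesis by simp
  next
    case False
    hence "T2 i = T1 i" using step3 i by metis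
    moreover have "C (i+1) (T1 (i+1)) \<le> C (i+1) (T1 i)"
      using step2 i by (auto simp: C_def)
    ultimately show ?thesis using le21[of "i+1"] i by simp
  qed
  have fin: "finite (T2 j)" "\<forall>e\<in>T2 j. l e \<ge> 0" if "j \<le> K" for j
    using rt2'[OF that] lens by (auto simp: routing_tree_def)
  have M: "0 < (1+eps)^i" "(1+eps)^i < (1+eps)^(i+1)" using eps_pos by auto
  show ?thesis
    using exch[OF fin(1)[of i] fin(1)[of "i+1"] fin(2)[of i] fin(2)[of "i+1"] M] c1 c2 i
    by (simp add: C_def)
qed

end
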